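(* Let $n\ge 2$ be an integer. For $i=1,2$ let $X_{i1},\dots,X_{in}$ be a random sample from the density $\frac{1}{\sigma}e^{-(x-\mu_i)/\sigma}$, $x\ge\mu_i$, the two samples independent, $\underline{\theta}=(\mu_1,\mu_2,\sigma)\in\mathbb{R}^2\times(0,\infty)$. Let $X_i=\min_jX_{ij}$, $Z_2=\max\{X_1,X_2\}$, $\mu_M=\mu_1I(X_1\ge X_2)+\mu_2I(X_1<X_2)$, $\mu=n(\max\{\mu_1,\mu_2\}-\min\{\mu_1,\mu_2\})/\sigma$, and $U=\frac{Z_2-\mu_M}{\sigma}$. Then for every $\underline{\theta}$, (i) $\mathbb{E}_{\underline{\theta}}(U)=\frac{1}{n}\left[\left(\frac{\mu+1}{2}\right)e^{-\mu}+1\right]$; (ii) $\mathbb{E}_{\underline{\theta}}(U^2)=\frac{1}{n^2}\left[\frac{\mu^2+3\mu+3}{2}e^{-\mu}+2\right]$.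
   Context: $I(A)$ is the indicator of $A$; $\mathbb{E}_{\underline{\theta}}$ is expectation under the parameter $\underline{\theta}$. *)

theory Defs
  imports "HOL-Probability.Probability"
begin

definition sample_min :: "nat \<Rightarrow> (nat \<Rightarrow> 'a \<Rightarrow> real) \<Rightarrow> 'a \<Rightarrow> real" where
  "sample_min n Y \<omega> = Min ((\<lambda>j. Y j \<omega>) ` {1..n})"

end

theory Submission
  imports Defs "HOL-Probability.Probability" "HOL-Real_Asymp.Real_Asymp"
begin

lemma inner_gen:
  fixes c v :: real and \<phi> P :: "real \<Rightarrow> real"
  assumes c: "0 \<le> c" and v: "0 \<le> v"
    and [measurable]: "\<phi> \<in> borel_measurable borel"
    and dP: "\<And>y. DERIV P y :> exp (- y) * \<phi> y"
    and \<phi>nn: "\<And>y. c \<le> y \<Longrightarrow> 0 \<le> \<phi> y"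
    and lim: "(P \<longlongrightarrow> 0) at_top" and Pc: "P c \<le> 0"
  shows "(\<integral>\<^sup>+y. ennreal (exponential_density 1 y * (if y \<le> c then v else \<phi> y)) \<partial>lborel)
       = ennreal (v * (1 - exp (- c)) - P c)"
proof -
  have "(\<integral>\<^sup>+y. ennreal (exponential_density 1 y * (if y \<le> c then v else \<phi> y)) \<partial>lborel)
     = (\<integral>\<^sup>+y. ennreal (exp (- y) * v) * indicator {0..c} y + ennreal (exp (- y) * \<phi> y) * indicator {c..} y \<partial>lborel)"
  proof (rule nn_integral_cong_AE)
    show "AE y in lborel. ennreal (exponential_density 1 y * (if y \<le> c then v else \<phi> y))
       = ennreal (exp (- y) * v) * indicator {0..c} y + ennreal (exp (- y) * \<phi> y) * indicator {c..} y"
      using AE_lborel_singleton[of c]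
      by eventually_elim (use c in \<open>auto simp: exponential_density_def indicator_def\<close>)
  qed
  also have "\<dots> = (\<integral>\<^sup>+y. ennreal (exp (- y) * v) * indicator {0..c} y \<partial>lborel)
      + (\<integral>\<^sup>+y. ennreal (exp (- y) * \<phi> y) * indicator {c..} y \<partial>lborel)"
    by (rule nn_integral_add) auto
  also have "(\<integral>\<^sup>+y. ennreal (exp (- y) * v) * indicator {0..c} y \<partial>lborel) = ennreal ((\<lambda>y. - v * exp (- y)) c - (\<lambda>y. - v * exp (- y)) 0)"
    by (rule nn_integral_FTC_Icc) (use c v in \<open>auto intro!: derivative_eq_intros\<close>)
  also have "(\<integral>\<^sup>+y. ennreal (exp (- y) * \<phi> y) * indicator {c..} y \<partial>lborel) = ennreal (0 - P c)"
    by (rule nn_integral_FTC_atLeast) (use dP \<phi>nn lim in \<open>auto\<close>)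
  also have "ennreal ((\<lambda>y. - v * exp (- y)) c - (\<lambda>y. - v * exp (- y)) 0) + ennreal (0 - P c)
     = ennreal (v * (1 - exp (- c)) - P c)"
    using c v Pc mult_left_mono[of "exp (- c)" 1 v] by (subst ennreal_plus[symmetric]) (auto simp: algebra_simps)
  finally show ?thesis .
qed

lemma outer_gen:
  fixes G :: "real \<Rightarrow> real \<Rightarrow> real" and H Q :: "real \<Rightarrow> real"
  assumes [measurable]: "case_prod G \<in> borel_measurable borel"
    and [measurable]: "H \<in> borel_measurable borel"
    and inner: "\<And>x. 0 \<le> x \<Longrightarrow> (\<integral>\<^sup>+y. ennreal (exponential_density 1 y * G x y) \<partial>lborel) = ennreal (H x)"
    and Hnn: "\<And>x. 0 \<le> x \<Longrightarrow> 0 \<le> H x"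
    and dQ: "\<And>x. DERIV Q x :> exp (- x) * H x"
    and lim: "(Q \<longlongrightarrow> 0) at_top"
  shows "(\<integral>\<^sup>+x. \<integral>\<^sup>+y. ennreal (exponential_density 1 x * exponential_density 1 y * G x y) \<partial>lborel \<partial>lborel)
     = ennreal (- Q 0)"
proof -
  have mG[measurable]: "(\<lambda>y. G x y) \<in> borel_measurable borel" for x
  proof -
    have "(\<lambda>y. (x, y)) \<in> borel_measurable borel"
      by (intro borel_measurable_continuous_onI continuous_intros)
    from measurable_compose[OF this assms(1)] show ?thesis by simp
  qed
  have "(\<integral>\<^sup>+x. \<integral>\<^sup>+y. ennreal (exponential_density 1 x * exponential_density 1 y * G x y) \<partial>lborel \<partial>lborel)
     = (\<integral>\<^sup>+x. ennreal (exponential_density 1 x) * \<integral>\<^sup>+y. ennreal (exponential_density 1 y * G x y) \<partial>lborel \<partial>lborel)"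
  proof (rule nn_integral_cong)
    fix x :: real
    have "(\<integral>\<^sup>+y. ennreal (exponential_density 1 x * exponential_density 1 y * G x y) \<partial>lborel)
       = (\<integral>\<^sup>+y. ennreal (exponential_density 1 x) * ennreal (exponential_density 1 y * G x y) \<partial>lborel)"
      by (rule nn_integral_cong) (simp add: ennreal_mult' exponential_density_nonneg mult.assoc)
    also have "\<dots> = ennreal (exponential_density 1 x) * \<integral>\<^sup>+y. ennreal (exponential_density 1 y * G x y) \<partial>lborel"
      by (rule nn_integral_cmult) measurable
    finally show "(\<integral>\<^sup>+y. ennreal (exponential_density 1 x * exponential_density 1 y * G x y) \<partial>lborel)
       = ennreal (exponential_density 1 x) * \<integral>\<^sup>+y. ennreal (exponential_density 1 y * G x y) \<partial>lborel" .
  qed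
  also have "\<dots> = (\<integral>\<^sup>+x. ennreal (exp (- x) * H x) * indicator {0..} x \<partial>lborel)"
  proof (rule nn_integral_cong)
    fix x :: real
    show "ennreal (exponential_density 1 x) * (\<integral>\<^sup>+y. ennreal (exponential_density 1 y * G x y) \<partial>lborel)
       = ennreal (exp (- x) * H x) * indicator {0..} x"
    proof (cases "0 \<le> x")
      case True
      show ?thesis unfolding inner[OF True] using True
        by (simp add: exponential_density_def ennreal_mult' indicator_def)
    qed (auto simp: exponential_density_def indicator_def)
  qed
  also have "\<dots> = ennreal (0 - Q 0)"
    by (rule nn_integral_FTC_atLeast) (use dQ Hnn lim in \<open>auto\<close>)
  finally show ?thesis by simp
qed

lemma K1_pos:
  fixes b :: real assumes b: "0 \<le> b"
  shows "(\<integral>\<^sup>+x. \<integral>\<^sup>+y. ennreal (exponential_density 1 x * exponential_density 1 y * (if y \<le> x + b then x else y)) \<partial>lborel \<partial>lborel)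
     = ennreal (1 + (b + 1) / 2 * exp (- b))"
proof -
  have "(\<integral>\<^sup>+x. \<integral>\<^sup>+y. ennreal (exponential_density 1 x * exponential_density 1 y * (if y \<le> x + b then x else y)) \<partial>lborel \<partial>lborel)
     = ennreal (- (\<lambda>x. - (x + 1) * exp (- x) - (b + 1) / 2 * exp (- 2 * x - b)) 0)"
  proof (rule outer_gen[where H="\<lambda>x. x * (1 - exp (- (x + b))) + (x + b + 1) * exp (- (x + b))"])
    fix x :: real assume x: "0 \<le> x"
    show "(\<integral>\<^sup>+y. ennreal (exponential_density 1 y * (if y \<le> x + b then x else y)) \<partial>lborel)
      = ennreal (x * (1 - exp (- (x + b))) + (x + b + 1) * exp (- (x + b)))"
    proof -
      have p: "0 \<le> b * exp (- b - x)" "0 \<le> x * exp (- b - x)" "0 \<le> exp (- b - x)" using x b by auto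
      show ?thesis
        apply (subst inner_gen[where P="\<lambda>y. - (y + 1) * exp (- y)"])
        using x b p apply (auto intro!: derivative_eq_intros simp: algebra_simps)
        apply real_asymp
        using p apply linarith
        done
    qed
    show "0 \<le> x * (1 - exp (- (x + b))) + (x + b + 1) * exp (- (x + b))"
      using x b by (intro add_nonneg_nonneg mult_nonneg_nonneg) auto
  next
    fix x :: real
    show "DERIV (\<lambda>x. - (x + 1) * exp (- x) - (b + 1) / 2 * exp (- 2 * x - b)) x :>
      exp (- x) * (x * (1 - exp (- (x + b))) + (x + b + 1) * exp (- (x + b)))"
    proof -
      have e: "exp (- x) * exp (- b - x) = exp (- (x * 2) - b)"
        by (simp add: mult_exp_exp algebra_simps)
      show ?thesis
        apply (rule derivative_eq_intros refl)+
        apply (simp add: algebra_simps e)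
        done
    qed
  next
    show "((\<lambda>x. - (x + 1) * exp (- x) - (b + 1) / 2 * exp (- 2 * x - b)) \<longlongrightarrow> 0) at_top"
      by real_asymp
  qed (auto simp del: borel_prod simp add: borel_prod[symmetric])
  then show ?thesis by (simp add: add.commute)
qed

lemma K2_pos:
  fixes b :: real assumes b: "0 \<le> b"
  shows "(\<integral>\<^sup>+x. \<integral>\<^sup>+y. ennreal (exponential_density 1 x * exponential_density 1 y * (if y \<le> x + b then x else y)\<^sup>2) \<partial>lborel \<partial>lborel)
     = ennreal (2 + (b\<^sup>2 + 3 * b + 3) / 2 * exp (- b))"
proof -
  have "(\<integral>\<^sup>+x. \<integral>\<^sup>+y. ennreal (exponential_density 1 x * exponential_density 1 y * (if y \<le> x + b then x else y)\<^sup>2) \<partial>lborel \<partial>lborel)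
     = ennreal (- (\<lambda>x. - (x\<^sup>2 + 2 * x + 2) * exp (- x) - exp (- 2 * x - b) * ((b + 1) * x + (b + 1) / 2 + (b\<^sup>2 + 2 * b + 2) / 2)) 0)"
  proof (rule outer_gen[where H="\<lambda>x. x\<^sup>2 * (1 - exp (- (x + b))) + ((x + b)\<^sup>2 + 2 * (x + b) + 2) * exp (- (x + b))"])
    fix x :: real assume x: "0 \<le> x"
    have eq: "(if y \<le> x + b then x else y)\<^sup>2 = (if y \<le> x + b then x\<^sup>2 else y\<^sup>2)" for y by simp
    show "(\<integral>\<^sup>+y. ennreal (exponential_density 1 y * (if y \<le> x + b then x else y)\<^sup>2) \<partial>lborel)
      = ennreal (x\<^sup>2 * (1 - exp (- (x + b))) + ((x + b)\<^sup>2 + 2 * (x + b) + 2) * exp (- (x + b)))"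
    proof -
      have p: "0 \<le> ((x + b)\<^sup>2 + 2 * (x + b) + 2) * exp (- (x + b))" using x b by auto
      show ?thesis
        unfolding eq
        apply (subst inner_gen[where P="\<lambda>y. - (y\<^sup>2 + 2 * y + 2) * exp (- y)"])
        using x b p apply (auto intro!: derivative_eq_intros simp: algebra_simps power2_eq_square)
        apply real_asymp
        apply (rule order_trans[of _ 0])
         apply simp
        apply (intro add_nonneg_nonneg mult_nonneg_nonneg; simp)
        done
    qed
    show "0 \<le> x\<^sup>2 * (1 - exp (- (x + b))) + ((x + b)\<^sup>2 + 2 * (x + b) + 2) * exp (- (x + b))"
      using x b by (intro add_nonneg_nonneg mult_nonneg_nonneg) auto
  next
    fix x :: real
    show "DERIV (\<lambda>x. - (x\<^sup>2 + 2 * x + 2) * exp (- x) - exp (- 2 * x - b) * ((b + 1) * x + (b + 1) / 2 + (b\<^sup>2 + 2 * b + 2) / 2)) x :>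
      exp (- x) * (x\<^sup>2 * (1 - exp (- (x + b))) + ((x + b)\<^sup>2 + 2 * (x + b) + 2) * exp (- (x + b)))"
    proof -
      have e: "exp (- x) * exp (- b - x) = exp (- (x * 2) - b)"
        by (simp add: mult_exp_exp algebra_simps)
      show ?thesis
        apply (rule derivative_eq_intros refl)+
        apply (simp add: algebra_simps e power2_eq_square)
        apply (simp add: field_simps)
        done
    qed
  next
    show "((\<lambda>x. - (x\<^sup>2 + 2 * x + 2) * exp (- x) - exp (- 2 * x - b) * ((b + 1) * x + (b + 1) / 2 + (b\<^sup>2 + 2 * b + 2) / 2)) \<longlongrightarrow> 0) at_top"
      by real_asymp
  qed (auto simp del: borel_prod simp add: borel_prod[symmetric])
  then show ?thesis by (simp add: algebra_simps add_divide_distrib)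
qed

lemma K_swap:
  fixes a :: real and \<psi> :: "real \<Rightarrow> real"
  assumes [measurable]: "\<psi> \<in> borel_measurable borel"
  shows "(\<integral>\<^sup>+x. \<integral>\<^sup>+y. ennreal (exponential_density 1 x * exponential_density 1 y * \<psi> (if y \<le> x + a then x else y)) \<partial>lborel \<partial>lborel)
     = (\<integral>\<^sup>+x. \<integral>\<^sup>+y. ennreal (exponential_density 1 x * exponential_density 1 y * \<psi> (if y \<le> x + (- a) then x else y)) \<partial>lborel \<partial>lborel)"
proof -
  have "(\<integral>\<^sup>+x. \<integral>\<^sup>+y. ennreal (exponential_density 1 x * exponential_density 1 y * \<psi> (if y \<le> x + a then x else y)) \<partial>lborel \<partial>lborel)
     = (\<integral>\<^sup>+y. \<integral>\<^sup>+x. ennreal (exponential_density 1 x * exponential_density 1 y * \<psi> (if y \<le> x + a then x else y)) \<partial>lborel \<partial>lborel)"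
    by (rule lborel_pair.Fubini'[symmetric]) (simp del: borel_prod add: borel_prod[symmetric])
  also have "\<dots> = (\<integral>\<^sup>+x. \<integral>\<^sup>+y. ennreal (exponential_density 1 x * exponential_density 1 y * \<psi> (if y \<le> x + (- a) then x else y)) \<partial>lborel \<partial>lborel)"
  proof (rule nn_integral_cong, rule nn_integral_cong_AE)
    fix u :: real
    show "AE v in lborel. ennreal (exponential_density 1 v * exponential_density 1 u * \<psi> (if u \<le> v + a then v else u))
       = ennreal (exponential_density 1 u * exponential_density 1 v * \<psi> (if v \<le> u + (- a) then u else v))"
      using AE_lborel_singleton[of "u - a"]
      by eventually_elim (auto simp: mult.commute)
  qed
  finally show ?thesis .
qed

theorem lemma4p1:
  fixes M :: "'a measure" and X :: "nat \<Rightarrow> nat \<Rightarrow> 'a \<Rightarrow> real"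
    and n :: nat and \<mu>1 \<mu>2 \<sigma> :: real
  assumes P: "prob_space M"
    and n: "n \<ge> 2"
    and sigma: "\<sigma> > 0"
    and indep: "prob_space.indep_vars M (\<lambda>_. borel) (\<lambda>(i, j). X i j) ({1, 2} \<times> {1..n})"
    and d1: "\<forall>j\<in>{1..n}. distributed M lborel (X 1 j)
               (\<lambda>x. ennreal (exponential_density (1 / \<sigma>) (x - \<mu>1)))"
    and d2: "\<forall>j\<in>{1..n}. distributed M lborel (X 2 j)
               (\<lambda>x. ennreal (exponential_density (1 / \<sigma>) (x - \<mu>2)))"
  defines "U \<equiv> \<lambda>\<omega>. (max (sample_min n (X 1) \<omega>) (sample_min n (X 2) \<omega>)
                     - (if sample_min n (X 1) \<omega> \<ge> sample_min n (X 2) \<omega> then \<mu>1 else \<mu>2)) / \<sigma>"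
    and "\<mu> \<equiv> real n * (max \<mu>1 \<mu>2 - min \<mu>1 \<mu>2) / \<sigma>"
  shows "(integrable M U \<and>
         (\<integral>\<omega>. U \<omega> \<partial>M) = (1 / real n) * (((\<mu> + 1) / 2) * exp (- \<mu>) + 1)) \<and>
         (integrable M (\<lambda>\<omega>. (U \<omega>)\<^sup>2) \<and>
         (\<integral>\<omega>. (U \<omega>)\<^sup>2 \<partial>M) =
           (1 / (real n)\<^sup>2) * (((\<mu>\<^sup>2 + 3 * \<mu> + 3) / 2) * exp (- \<mu>) + 2))"
proof -
  interpret prob_space M by (rule P)
  define mu where "mu i = (if i = (1::nat) then \<mu>1 else \<mu>2)" for i
  define c where "c = real n / \<sigma>"
  have c: "0 < c" using n sigma by (simp add: c_def)
  define Z where "Z p \<omega> = - c * mu (fst p) + c * X (fst p) (snd p) \<omega>" for p \<omega>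
  have dX: "distributed M lborel (X i j) (\<lambda>x. ennreal (exponential_density (1 / \<sigma>) (x - mu i)))"
    if "i \<in> {1,2}" "j \<in> {1..n}" for i j
    using that d1 d2 by (auto simp: mu_def)
  have dZ: "distributed M lborel (Z p) (\<lambda>x. ennreal (exponential_density (1 / real n) x))"
    if p: "p \<in> {1,2} \<times> {1..n}" for p
  proof -
    obtain i j where ij: "p = (i, j)" "i \<in> {1,2}" "j \<in> {1..n}" using p by auto
    have "distributed M lborel (\<lambda>\<omega>. - c * mu i + c * X i j \<omega>)
        (\<lambda>x. ennreal (exponential_density (1 / \<sigma>) ((x - - c * mu i) / c - mu i)) / \<bar>c\<bar>)"
      by (rule distributed_affine[OF dX[OF ij(2,3)]]) (use c in simp)
    also have "(\<lambda>x. ennreal (exponential_density (1 / \<sigma>) ((x - - c * mu i) / c - mu i)) / \<bar>c\<bar>)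
        = (\<lambda>x. ennreal (exponential_density (1 / real n) x))"
    proof
      fix x :: real
      have "(x - - c * mu i) / c - mu i = x / c" using c by (simp add: field_simps)
      then show "ennreal (exponential_density (1 / \<sigma>) ((x - - c * mu i) / c - mu i)) / \<bar>c\<bar>
        = ennreal (exponential_density (1 / real n) x)"
        using c sigma n
        by (auto simp: exponential_density_def divide_ennreal c_def field_simps mult_less_0_iff)
    qed
    finally show ?thesis by (simp add: Z_def[abs_def] ij algebra_simps)
  qed
  have indZ: "indep_vars (\<lambda>_. borel) Z ({1,2} \<times> {1..n})"
  proof -
    have "indep_vars (\<lambda>_. borel) (\<lambda>p x. (\<lambda>z. - c * mu (fst p) + c * z) ((\<lambda>(i, j). X i j) p x)) ({1,2} \<times> {1..n})"
      by (rule indep_vars_compose2[OF indep]) simp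
    then show ?thesis
      by (rule indep_vars_cong[THEN iffD1, rotated 3]) (auto simp: Z_def fun_eq_iff)
  qed
  define W where "W i \<omega> = Min ((\<lambda>p. Z p \<omega>) ` ({i} \<times> {1..n}))" for i \<omega>
  have fin: "finite ({i::nat} \<times> {1..n})" "{i::nat} \<times> {1..n} \<noteq> {}" for i using n by auto
  have dW: "distributed M lborel (W i) (\<lambda>x. ennreal (exponential_density 1 x))" if i: "i \<in> {1,2}" for i
  proof -
    have "distributed M lborel (\<lambda>\<omega>. Min ((\<lambda>p. Z p \<omega>) ` ({i} \<times> {1..n})))
       (\<lambda>x. ennreal (exponential_density (\<Sum>p\<in>{i} \<times> {1..n}. 1 / real n) x))"
      by (rule exponential_distributed_Min[OF fin])
         (use i n dZ in \<open>auto intro: indep_vars_subset[OF indZ]\<close>)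
    moreover have "(\<Sum>p\<in>{i} \<times> {1..n}. 1 / real n) = 1"
      using n by (simp add: card_cartesian_product)
    ultimately show ?thesis by (simp add: W_def[abs_def])
  qed
  have Wsm: "W i \<omega> = c * (sample_min n (X i) \<omega> - mu i)" for i \<omega>
  proof -
    have "(\<lambda>p. Z p \<omega>) ` ({i} \<times> {1..n}) = (\<lambda>z. - c * mu i + c * z) ` ((\<lambda>j. X i j \<omega>) ` {1..n})"
      by (force simp: Z_def image_iff)
    moreover have "mono (\<lambda>z. - c * mu i + c * z)"
      using c by (auto simp: mono_def)
    ultimately show ?thesis
      using n mono_Min_commute[of "\<lambda>z. - c * mu i + c * z" "(\<lambda>j. X i j \<omega>) ` {1..n}"]
      by (simp add: W_def sample_min_def algebra_simps)
  qed
  have indW: "indep_var lborel (W 1) lborel (W 2)"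
  proof -
    have "indep_var
      lborel ((\<lambda>f. Min (f ` ({1} \<times> {1..n}))) \<circ> (\<lambda>\<omega>. restrict (\<lambda>p. Z p \<omega>) ({1} \<times> {1..n})))
      lborel ((\<lambda>f. Min (f ` ({2} \<times> {1..n}))) \<circ> (\<lambda>\<omega>. restrict (\<lambda>p. Z p \<omega>) ({2} \<times> {1..n})))"
      using fin by (intro indep_var_compose[OF indep_var_restrict[OF indZ]] borel_measurable_Min) auto
    also have "((\<lambda>f. Min (f ` ({1} \<times> {1..n}))) \<circ> (\<lambda>\<omega>. restrict (\<lambda>p. Z p \<omega>) ({1} \<times> {1..n}))) = W 1"
      by (auto simp: W_def fun_eq_iff cong: rev_conj_cong)
    also have "((\<lambda>f. Min (f ` ({2} \<times> {1..n}))) \<circ> (\<lambda>\<omega>. restrict (\<lambda>p. Z p \<omega>) ({2} \<times> {1..n}))) = W 2"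
      by (auto simp: W_def fun_eq_iff cong: rev_conj_cong)
    finally show ?thesis .
  qed
  have dWW: "distributed M (lborel \<Otimes>\<^sub>M lborel) (\<lambda>\<omega>. (W 1 \<omega>, W 2 \<omega>))
      (\<lambda>(x, y). ennreal (exponential_density 1 x) * ennreal (exponential_density 1 y))"
    by (rule distributed_joint_indep[OF _ _ dW dW indW]) (auto intro: lborel.sigma_finite_measure_axioms)
  define a where "a = c * (\<mu>1 - \<mu>2)"
  define G where "G x y = (if y \<le> x + a then x else y)" for x y :: real
  have Ueq: "U = (\<lambda>\<omega>. G (W 1 \<omega>) (W 2 \<omega>) / real n)"
  proof
    fix \<omega>
    have cn: "c / real n = 1 / \<sigma>" using n sigma by (simp add: c_def)
    have iff: "c * (sample_min n (X 2) \<omega> - \<mu>2) \<le> c * (sample_min n (X 1) \<omega> - \<mu>1) + c * (\<mu>1 - \<mu>2)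
       \<longleftrightarrow> sample_min n (X 2) \<omega> \<le> sample_min n (X 1) \<omega>"
      using c by (simp add: algebra_simps)
    show "U \<omega> = G (W 1 \<omega>) (W 2 \<omega>) / real n"
      unfolding U_def G_def Wsm a_def iff using n sigma
      by (auto simp: mu_def c_def field_simps max_def)
  qed
  have mW[measurable]: "W i \<in> borel_measurable M" if "i \<in> {1,2}" for i
    using dW[OF that] by (auto simp: distributed_def)
  have mG[measurable]: "case_prod G \<in> borel_measurable (lborel \<Otimes>\<^sub>M lborel)"
    unfolding G_def by measurable
  have mG'[measurable]: "(\<lambda>y. G x y) \<in> borel_measurable lborel" for x
    unfolding G_def by measurable
  have key: "(\<integral>\<^sup>+\<omega>. ennreal ((G (W 1 \<omega>) (W 2 \<omega>))^k * r) \<partial>M)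
     = (\<integral>\<^sup>+x. \<integral>\<^sup>+y. ennreal (exponential_density 1 x * exponential_density 1 y * (G x y)^k) \<partial>lborel \<partial>lborel) * ennreal r"
    if r: "0 \<le> r" for k r
  proof -
    have "(\<integral>\<^sup>+\<omega>. ennreal ((G (W 1 \<omega>) (W 2 \<omega>))^k * r) \<partial>M)
      = (\<integral>\<^sup>+p. (case p of (x, y) \<Rightarrow> ennreal (exponential_density 1 x) * ennreal (exponential_density 1 y))
             * (case p of (x, y) \<Rightarrow> ennreal ((G x y)^k * r)) \<partial>(lborel \<Otimes>\<^sub>M lborel))"
      by (subst distributed_nn_integral[OF dWW]) auto
    also have "\<dots> = (\<integral>\<^sup>+x. \<integral>\<^sup>+y. ennreal (exponential_density 1 x) * ennreal (exponential_density 1 y)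
             * ennreal ((G x y)^k * r) \<partial>lborel \<partial>lborel)"
      by (subst lborel.nn_integral_fst[symmetric]) auto
    also have "\<dots> = (\<integral>\<^sup>+x. \<integral>\<^sup>+y. ennreal (exponential_density 1 x * exponential_density 1 y * (G x y)^k) * ennreal r \<partial>lborel \<partial>lborel)"
      by (intro nn_integral_cong)
         (simp add: ennreal_mult' ennreal_mult'' exponential_density_nonneg r mult.assoc)
    also have "\<dots> = (\<integral>\<^sup>+x. (\<integral>\<^sup>+y. ennreal (exponential_density 1 x * exponential_density 1 y * (G x y)^k) \<partial>lborel) * ennreal r \<partial>lborel)"
      by (intro nn_integral_cong nn_integral_multc) measurable
    also have "\<dots> = (\<integral>\<^sup>+x. \<integral>\<^sup>+y. ennreal (exponential_density 1 x * exponential_density 1 y * (G x y)^k) \<partial>lborel \<partial>lborel) * ennreal r"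
      by (rule nn_integral_multc) measurable
    finally show ?thesis .
  qed
  have mua: "\<mu> = \<bar>a\<bar>"
  proof -
    have "\<bar>a\<bar> = c * \<bar>\<mu>1 - \<mu>2\<bar>" using c by (simp add: a_def abs_mult)
    moreover have "max \<mu>1 \<mu>2 - min \<mu>1 \<mu>2 = \<bar>\<mu>1 - \<mu>2\<bar>" by (simp add: max_def min_def)
    ultimately show ?thesis by (simp add: \<mu>_def c_def)
  qed
  have KK1: "(\<integral>\<^sup>+x. \<integral>\<^sup>+y. ennreal (exponential_density 1 x * exponential_density 1 y * (G x y)^1) \<partial>lborel \<partial>lborel)
      = ennreal (1 + (\<mu> + 1) / 2 * exp (- \<mu>))"
  proof (cases "0 \<le> a")
    case True
    then show ?thesis using K1_pos[OF True] by (simp add: G_def mua)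
  next
    case False
    then show ?thesis using K1_pos[of "- a"] K_swap[of "\<lambda>t. t" a] by (simp add: G_def mua)
  qed
  have KK2: "(\<integral>\<^sup>+x. \<integral>\<^sup>+y. ennreal (exponential_density 1 x * exponential_density 1 y * (G x y)^2) \<partial>lborel \<partial>lborel)
      = ennreal (2 + (\<mu>\<^sup>2 + 3 * \<mu> + 3) / 2 * exp (- \<mu>))"
  proof (cases "0 \<le> a")
    case True
    then show ?thesis using K2_pos[OF True] by (simp add: G_def mua)
  next
    case False
    then show ?thesis using K2_pos[of "- a"] K_swap[of "\<lambda>t. t\<^sup>2" a] by (simp add: G_def mua)
  qed
  have AEW: "AE \<omega> in M. 0 \<le> W i \<omega>" if "i \<in> {1,2}" for i
    by (subst distributed_AE2[OF dW[OF that]]) (auto simp: exponential_density_def)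
  have AEG: "AE \<omega> in M. 0 \<le> G (W 1 \<omega>) (W 2 \<omega>)"
    using AEW[of 1, simplified] AEW[of 2, simplified] by eventually_elim (auto simp: G_def)
  have mU[measurable]: "U \<in> borel_measurable M"
    unfolding Ueq by measurable
  have mu0: "0 \<le> \<mu>" using mua by simp
  have I1: "(\<integral>\<^sup>+\<omega>. ennreal (U \<omega>) \<partial>M) = ennreal ((1 / real n) * (((\<mu> + 1) / 2) * exp (- \<mu>) + 1))"
  proof -
    have "(\<integral>\<^sup>+\<omega>. ennreal (U \<omega>) \<partial>M) = (\<integral>\<^sup>+\<omega>. ennreal ((G (W 1 \<omega>) (W 2 \<omega>))^1 * (1 / real n)) \<partial>M)"
      by (simp add: Ueq)
    also have "\<dots> = ennreal (1 + (\<mu> + 1) / 2 * exp (- \<mu>)) * ennreal (1 / real n)"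
      by (subst key) (auto simp: KK1[simplified])
    also have "\<dots> = ennreal ((1 / real n) * (((\<mu> + 1) / 2) * exp (- \<mu>) + 1))"
      using mu0 by (subst ennreal_mult[symmetric]) (auto simp: algebra_simps)
    finally show ?thesis .
  qed
  have I2: "(\<integral>\<^sup>+\<omega>. ennreal ((U \<omega>)\<^sup>2) \<partial>M) = ennreal ((1 / (real n)\<^sup>2) * (((\<mu>\<^sup>2 + 3 * \<mu> + 3) / 2) * exp (- \<mu>) + 2))"
  proof -
    have "(\<integral>\<^sup>+\<omega>. ennreal ((U \<omega>)\<^sup>2) \<partial>M) = (\<integral>\<^sup>+\<omega>. ennreal ((G (W 1 \<omega>) (W 2 \<omega>))^2 * (1 / (real n)\<^sup>2)) \<partial>M)"
      by (simp add: Ueq power_divide)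
    also have "\<dots> = ennreal (2 + (\<mu>\<^sup>2 + 3 * \<mu> + 3) / 2 * exp (- \<mu>)) * ennreal (1 / (real n)\<^sup>2)"
      by (subst key) (auto simp: KK2)
    also have "\<dots> = ennreal ((1 / (real n)\<^sup>2) * (((\<mu>\<^sup>2 + 3 * \<mu> + 3) / 2) * exp (- \<mu>) + 2))"
      using mu0 by (subst ennreal_mult[symmetric]) (auto simp: algebra_simps)
    finally show ?thesis .
  qed
  have AEU: "AE \<omega> in M. 0 \<le> U \<omega>"
    using AEG by eventually_elim (simp add: Ueq)
  show ?thesis
  proof (intro conjI)
    have "integrable M U \<and> integral\<^sup>L M U = (1 / real n) * (((\<mu> + 1) / 2) * exp (- \<mu>) + 1)"
      by (rule nn_integral_eq_integrable[THEN iffD1, OF mU AEU _ I1]) (use mu0 in simp)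
    then show "integrable M U" "integral\<^sup>L M U = (1 / real n) * (((\<mu> + 1) / 2) * exp (- \<mu>) + 1)" by auto
    have "integrable M (\<lambda>\<omega>. (U \<omega>)\<^sup>2) \<and> (\<integral>\<omega>. (U \<omega>)\<^sup>2 \<partial>M) = (1 / (real n)\<^sup>2) * (((\<mu>\<^sup>2 + 3 * \<mu> + 3) / 2) * exp (- \<mu>) + 2)"
      by (rule nn_integral_eq_integrable[THEN iffD1, OF _ _ _ I2]) (use mu0 in auto)
    then show "integrable M (\<lambda>\<omega>. (U \<omega>)\<^sup>2)" "(\<integral>\<omega>. (U \<omega>)\<^sup>2 \<partial>M) = (1 / (real n)\<^sup>2) * (((\<mu>\<^sup>2 + 3 * \<mu> + 3) / 2) * exp (- \<mu>) + 2)" by auto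
  qed
qed

end
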